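(* Let $p$ be a prime and $(r,e,d)\in\mathscr{U}(p)$ with $r\mid p-1$; write $rs=p-1$. Then \[ \det M_d((x^r-1)^e)=(-1)^{d(d-1)/2+(r-1)g/2}\binom{e}{s}\binom{e}{2s}\cdots\binom{e}{ds}\quad\text{in }\mathbb{F}_p, \] and in particular $\det M_d((x^r-1)^e)\ne0$.
   Context: Let $p$ be a prime. For a polynomial $h(x)\in\mathbb{F}_p[x]$ and integers $e\ge0$, $0\le d\le p$, write $h(x)^e=\sum_{i\ge0}c_ix^i$ ($c_i=0$ for $i<0$) and let $M_d(h(x)^e)$ be the $d\times d$ matrix with $(i,j)$ entry $c_{ip+j-d-1}$. For integer triples put $g=\left\{red-\frac{d(d+1)}{2}(p-1)\right\}\big/\frac{r(r-1)}{2}\in\mathbb{Q}$. $\mathscr{U}(p)$ is the set of integer triples $(r,e,d)$ with $r\ge2$, $e\ge1$, $1\le d\le p$, $d(p-1)\le re\le r(p-1)$, $g>0$, and $g\in2\mathbb{Z}$ if $p\ne2$, $g\in\mathbb{Z}$ if $p=2$. *)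

theory Defs
  imports "Jordan_Normal_Form.Determinant" "HOL-Computational_Algebra.Polynomial" "HOL-Number_Theory.Cong"
begin

definition coeffZ :: "int poly \<Rightarrow> int \<Rightarrow> int" where
  "coeffZ h i = (if i < 0 then 0 else coeff h (nat i))"

(* M_d(h) : d x d matrix, (i,j) entry (1-based) c_{ip+j-d-1};
   here with 0-based indices i,j < d, i.e. entry c_{(i+1)p+(j+1)-d-1} *)
definition Mmat :: "nat \<Rightarrow> nat \<Rightarrow> int poly \<Rightarrow> int mat" where
  "Mmat p d h = mat d d (\<lambda>(i,j). coeffZ h (int (i+1) * int p + int (j+1) - int d - 1))"

definition gval :: "nat \<Rightarrow> int \<Rightarrow> int \<Rightarrow> int \<Rightarrow> rat" where
  "gval p r e d = (of_int (r*e*d) - of_int (d*(d+1)) / 2 * (of_nat p - 1)) / (of_int (r*(r-1)) / 2)"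

definition U_set :: "nat \<Rightarrow> (int \<times> int \<times> int) set" where
  "U_set p = {(r,e,d). r \<ge> 2 \<and> e \<ge> 1 \<and> 1 \<le> d \<and> d \<le> int p \<and>
      d * (int p - 1) \<le> r * e \<and> r * e \<le> r * (int p - 1) \<and> gval p r e d > 0 \<and>
      (if p \<noteq> 2 then (\<exists>k::int. gval p r e d = of_int (2*k)) else (\<exists>k::int. gval p r e d = of_int k))}"

end

theory Submission
  imports Defs "HOL-Computational_Algebra.Primes"
begin


lemma det_antidiag:
  fixes A :: "'a::comm_ring_1 mat"
  assumes "A \<in> carrier_mat n n" "\<And>i j. i<n \<Longrightarrow> j<n \<Longrightarrow> i+j \<noteq> n-1 \<Longrightarrow> A$$(i,j)=0"
  shows "det A = (-1)^(\<Sum>i<n. i) * (\<Prod>i<n. A$$(i, n-1-i))"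
  using assms
proof (induction n arbitrary: A)
  case 0
  then show ?case by (simp add: det_def)
next
  case (Suc m)
  have "det A = (\<Sum>j<Suc m. A $$ (0,j) * cofactor A 0 j)"
    by (rule laplace_expansion_row[OF Suc.prems(1)]) simp
  also have "\<dots> = A $$ (0,m) * cofactor A 0 m"
  proof -
    have "(\<Sum>j<m. A $$ (0,j) * cofactor A 0 j) = 0"
      by (rule sum.neutral) (use Suc.prems(2) in auto)
    then show ?thesis by simp
  qed
  also have "cofactor A 0 m = (-1)^m * det (mat_delete A 0 m)"
    unfolding cofactor_def by simp
  also have "det (mat_delete A 0 m) = (-1)^(\<Sum>i<m. i) * (\<Prod>i<m. mat_delete A 0 m $$(i, m-1-i))"
  proof (rule Suc.IH)
    show "mat_delete A 0 m \<in> carrier_mat m m" using mat_delete_carrier[OF Suc.prems(1)] by simp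
    fix i j assume "i<m" "j<m" "i+j \<noteq> m-1"
    then show "mat_delete A 0 m $$ (i,j) = 0" using Suc.prems
      by (auto simp: mat_delete_def)
  qed
  also have "(\<Prod>i<m. mat_delete A 0 m $$(i, m-1-i)) = (\<Prod>i<m. A $$(Suc i, m-1-i))"
    using Suc.prems(1) by (intro prod.cong) (auto simp: mat_delete_def)
  finally show ?case
    by (simp add: prod.lessThan_Suc_shift power_add algebra_simps del: prod.lessThan_Suc)
qed



lemma coeff_xr:
  fixes R E n :: nat assumes R: "R > 0"
  shows "coeff ((monom (1::int) R - 1)^E) n =
     (if R dvd n \<and> n div R \<le> E then (-1)^(E - n div R) * int (E choose (n div R)) else 0)"
proof -
  have "(monom (1::int) R - 1)^E = (monom 1 R + (-1))^E" by simp
  also have "\<dots> = (\<Sum>k\<le>E. of_nat (E choose k) * monom 1 R ^ k * (-1) ^ (E - k))"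
    by (rule binomial_ring)
  also have "\<dots> = (\<Sum>k\<le>E. monom ((-1)^(E-k) * int (E choose k)) (R*k))"
  proof (rule sum.cong[OF refl])
    fix k
    have "monom (1::int) R ^ k = monom 1 (R*k)" by (simp add: monom_power mult.commute)
    moreover have "(-1::int poly)^(E-k) = [:(-1)^(E-k):]" proof - have "(-1::int poly) = [:-1:]" by (simp add: one_pCons) then show ?thesis by (simp only: poly_const_pow) qed
    moreover have "(of_nat (E choose k) :: int poly) = [:int (E choose k):]" by (simp add: of_nat_poly)
    ultimately show "of_nat (E choose k) * monom 1 R ^ k * (-1) ^ (E - k) = monom ((-1)^(E-k) * int (E choose k)) (R*k)"
      by (simp add: smult_monom)
  qed
  finally have eq: "(monom (1::int) R - 1)^E = (\<Sum>k\<le>E. monom ((-1)^(E-k) * int (E choose k)) (R*k))" .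
  have "coeff ((monom (1::int) R - 1)^E) n = (\<Sum>k\<le>E. if R*k = n then (-1)^(E-k) * int (E choose k) else 0)"
    unfolding eq coeff_sum coeff_monom by simp
  also have "\<dots> = (\<Sum>k\<in>{..E} \<inter> {k. R*k = n}. (-1)^(E-k) * int (E choose k))"
    by (simp add: sum.inter_filter[symmetric] Collect_conj_eq[symmetric] Int_def)
  also have "\<dots> = (if R dvd n \<and> n div R \<le> E then (-1)^(E - n div R) * int (E choose (n div R)) else 0)"
  proof (cases "R dvd n \<and> n div R \<le> E")
    case True
    then have "{..E} \<inter> {k. R*k = n} = {n div R}" using R by auto
    then show ?thesis using True by simp
  next
    case False
    then have "{..E} \<inter> {k. R*k = n} = {}" using R by auto
    then show ?thesis using False by simp
  qed
  finally show ?thesis .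
qed



lemma sum_id_lt: "2 * (\<Sum>i<n. i) = n * (n - 1::nat)"
proof (induction n)
  case (Suc n) thus ?case by (cases n) (auto simp: algebra_simps)
qed simp

lemma sum_suc_lt: "2 * (\<Sum>i<n. Suc i) = n * (n + 1::nat)"
  by (induction n) (auto simp: algebra_simps)

theorem lemma7:
  fixes p :: nat and r e d s :: int
  assumes "prime p"
    and "(r, e, d) \<in> U_set p"
    and "r * s = int p - 1"
  shows "[det (Mmat p (nat d) ((monom 1 (nat r) - 1) ^ nat e))
          = (-1) ^ nat (d*(d-1) div 2 + \<lfloor>of_int (r-1) * gval p r e d / 2\<rfloor>)
            * (\<Prod>k\<in>{1..d}. int (nat e choose nat (k*s)))] (mod int p)
    \<and> \<not> [det (Mmat p (nat d) ((monom 1 (nat r) - 1) ^ nat e)) = 0] (mod int p)"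
proof -
  from assms(2) have r2: "r \<ge> 2" and e1: "e \<ge> 1" and d1: "1 \<le> d" and dp: "d \<le> int p"
    and de: "d * (int p - 1) \<le> r * e" and ep: "r * e \<le> r * (int p - 1)"
    by (auto simp: U_set_def)
  have p2: "p \<ge> 2" using assms(1) prime_ge_2_nat by blast
  have s1: "s \<ge> 1"
  proof (rule ccontr)
    assume "\<not> s \<ge> 1" then have "s \<le> 0" by simp
    then have "r * s \<le> 0" using r2 by (simp add: mult_nonneg_nonpos)
    then show False using assms(3) p2 by simp
  qed
  have ep': "e \<le> int p - 1" using ep r2 by simp
  have ds: "d * s \<le> e"
  proof -
    have eq: "d * (int p - 1) = r * (d * s)" by (simp add: assms(3)[symmetric] algebra_simps)
    have "r * (d * s) \<le> r * e" using de unfolding eq .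
    then show ?thesis using r2 by simp
  qed
  have dr: "d \<le> r"
  proof -
    have "d * s \<le> r * s" using ds ep' assms(3) by simp
    then show ?thesis using s1 by simp
  qed
  define R where "R = nat r"
  define E where "E = nat e"
  define D where "D = nat d"
  define S where "S = nat s"
  define h where "h = (monom (1::int) R - 1) ^ E"
  define A where "A = Mmat p D h"
  have rR: "r = int R" and eE: "e = int E" and dD: "d = int D" and sS: "s = int S"
    using r2 e1 d1 s1 by (auto simp: R_def E_def D_def S_def)
  have R0: "R > 0" using r2 rR by simp
  have pRS: "int p = int R * int S + 1" using assms(3) rR sS by simp
  have DSE: "D * S \<le> E"
  proof -
    have "int (D * S) \<le> int E" using ds dD sS eE by simp
    then show ?thesis by (simp only: of_nat_le_iff)
  qed
  have iS: "(i+1)*S \<le> E" if "i < D" for i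
  proof -
    have "(i+1)*S \<le> D*S" using that by (intro mult_le_mono1) simp
    then show ?thesis using DSE by simp
  qed
  have Ep: "E < p" using ep' eE by simp
  have DR: "D \<le> R" using dr dD rR by simp
  have Acar: "A \<in> carrier_mat D D" by (simp add: A_def Mmat_def)
  have Aij: "A $$ (i,j) = coeffZ h (int (i+1) * int p + int (j+1) - int D - 1)" if "i<D" "j<D" for i j
    using that by (simp add: A_def Mmat_def)
  have off: "A $$ (i,j) = 0" if ij: "i<D" "j<D" "i+j \<noteq> D-1" for i j
  proof -
    define t where "t = int (i+1) * int p + int (j+1) - int D - 1"
    have teq: "t = int R * (int (i+1) * int S) + (int i + int j + 1 - int D)"
      unfolding t_def pRS by (simp add: algebra_simps)
    show ?thesis
    proof (cases "t < 0")
      case True then show ?thesis using Aij[OF ij(1,2)] by (simp add: coeffZ_def t_def)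
    next
      case False
      have nd: "\<not> R dvd nat t"
      proof
        assume "R dvd nat t"
        then have "int R dvd int (nat t)" by (simp only: of_nat_dvd_iff)
        then have "int R dvd t" using False by simp
        then have "int R dvd (int i + int j + 1 - int D)" unfolding teq
          by (simp add: dvd_add_right_iff)
        moreover have "int i + int j + 1 - int D \<noteq> 0" using ij by auto
        ultimately have "\<bar>int R\<bar> \<le> \<bar>int i + int j + 1 - int D\<bar>" by (rule dvd_imp_le_int[rotated])
        then show False using ij DR by auto
      qed
      have "A $$ (i,j) = coeffZ h t" using Aij[OF ij(1,2)] unfolding t_def .
      also have "\<dots> = coeff h (nat t)" using False by (simp add: coeffZ_def)
      also have "\<dots> = 0" unfolding h_def coeff_xr[OF R0] using nd by simp
      finally show ?thesis .
    qed
  qed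
  have diag: "A $$ (i, D-1-i) = (-1)^(E - (i+1)*S) * int (E choose ((i+1)*S))" if i: "i<D" for i
  proof -
    have "int (i+1) * int p + int (D-1-i+1) - int D - 1 = int (R * ((i+1)*S))"
      using i unfolding pRS by (simp add: algebra_simps of_nat_diff)
    moreover have "(i+1)*S \<le> E" using iS[OF i] .
    ultimately show ?thesis using Aij[OF i, of "D-1-i"] i R0
      by (simp add: coeffZ_def h_def coeff_xr[OF R0] del: of_nat_mult)
  qed
  have detA: "det A = (-1)^(\<Sum>i<D. i) * (\<Prod>i<D. (-1)^(E - (i+1)*S) * int (E choose ((i+1)*S)))"
    using det_antidiag[OF Acar off] diag by simp
  define N where "N = (\<Prod>i<D. E choose ((i+1)*S))"
  define K where "K = (\<Sum>i<D. i) + (\<Sum>i<D. E - (i+1)*S)"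
  have detA2: "det A = (-1)^K * int N"
    unfolding detA K_def N_def power_add prod.distrib power_sum by simp
  have K1: "int (\<Sum>i<D. i) = d*(d-1) div 2"
  proof -
    have "int (2 * (\<Sum>i<D. i)) = d * (d - 1)" unfolding sum_id_lt dD using d1 dD
      by (simp add: of_nat_diff)
    then show ?thesis by linarith
  qed
  have K2: "2 * int (\<Sum>i<D. E - (i+1)*S) = 2*d*e - s*d*(d+1)"
  proof -
    have "int (\<Sum>i<D. E - (i+1)*S) = (\<Sum>i<D. e - int (Suc i) * s)"
      unfolding of_nat_sum
    proof (rule sum.cong[OF refl])
      fix i assume "i \<in> {..<D}"
      then have "(i+1)*S \<le> E" using iS by simp
      then show "int (E - (i+1)*S) = e - int (Suc i) * s" using eE sS by (simp add: of_nat_diff algebra_simps)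
    qed
    also have "\<dots> = int D * e - s * int (\<Sum>i<D. Suc i)"
      by (simp add: sum_subtractf sum_distrib_left sum_distrib_right mult.commute)
    finally have "2 * int (\<Sum>i<D. E - (i+1)*S) = 2 * int D * e - s * int (2 * (\<Sum>i<D. Suc i))"
      by (simp add: algebra_simps)
    also have "\<dots> = 2*d*e - s*d*(d+1)" unfolding sum_suc_lt dD by (simp add: algebra_simps)
    finally show ?thesis .
  qed
  have gfl: "\<lfloor>of_int (r-1) * gval p r e d / 2\<rfloor> = int (\<Sum>i<D. E - (i+1)*S)"
  proof -
    define X where "X = int (\<Sum>i<D. E - (i+1)*S)"
    have rs: "(of_nat p - 1 :: rat) = of_int r * of_int s"
    proof -
      have "(of_int (r*s) :: rat) = of_int (int p - 1)" using assms(3) by simp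
      then show ?thesis by simp
    qed
    have X2: "(2::rat) * of_int X = 2 * of_int d * of_int e - of_int s * of_int d * (of_int d + 1)"
    proof -
      have "(of_int (2 * X) :: rat) = of_int (2*d*e - s*d*(d+1))" using K2 unfolding X_def by simp
      then show ?thesis by simp
    qed
    have r0: "(of_int r :: rat) \<noteq> 0" "(of_int r - 1 :: rat) \<noteq> 0" using r2 by auto
    have "of_int (r-1) * gval p r e d / 2 = (of_int X :: rat)"
    proof -
      have Xeq: "(of_int X::rat) = (2 * of_int d * of_int e - of_int s * of_int d * (of_int d + 1))/2"
        using X2 by simp
      show ?thesis unfolding gval_def rs Xeq using r0
        by (simp add: field_simps) algebra
    qed
    then have "\<lfloor>of_int (r-1) * gval p r e d / 2\<rfloor> = \<lfloor>(of_int X :: rat)\<rfloor>" by (rule arg_cong)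
    then show ?thesis unfolding floor_of_int X_def .
  qed
  have expo: "nat (d*(d-1) div 2 + \<lfloor>of_int (r-1) * gval p r e d / 2\<rfloor>) = K"
    unfolding gfl K_def K1[symmetric] of_nat_add[symmetric] nat_int ..
  have prodeq: "(\<Prod>k\<in>{1..d}. int (nat e choose nat (k*s))) = int N"
  proof -
    have "(\<Prod>k\<in>{1..d}. int (nat e choose nat (k*s))) = (\<Prod>i<D. int (E choose ((i+1)*S)))"
    proof (rule prod.reindex_bij_witness[where i = "\<lambda>i. int i + 1" and j = "\<lambda>k. nat k - 1"])
      fix k assume "k \<in> {1..d}" then show "int (nat k - 1) + 1 = k" by auto
    next
      fix k assume "k \<in> {1..d}" then show "nat k - 1 \<in> {..<D}" using dD by auto
    next
      fix i assume "i \<in> {..<D}" then show "nat (int i + 1) - 1 = i" by auto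
    next
      fix i assume "i \<in> {..<D}" then show "int i + 1 \<in> {1..d}" using dD by auto
    next
      fix k assume k: "k \<in> {1..d}"
      have "nat (k*s) = (nat k - 1 + 1) * S" using k sS s1 by (simp add: nat_mult_distrib)
      then show "int (E choose ((nat k - 1 + 1) * S)) = int (nat e choose nat (k*s))"
        using eE by (simp add: E_def)
    qed
    then show ?thesis by (simp add: N_def)
  qed
  have Nnd: "\<not> p dvd N"
  proof
    assume "p dvd N"
    then obtain i where i: "i < D" and pd: "p dvd (E choose ((i+1)*S))"
      using prime_dvd_prod_iff[OF finite_lessThan assms(1), of "\<lambda>i. E choose ((i+1)*S)" D] N_def
      by auto
    have le: "(i+1)*S \<le> E" using iS[OF i] .
    have "p dvd (fact ((i+1)*S) * fact (E - (i+1)*S) :: nat) * (E choose ((i+1)*S))"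
      using pd by (rule dvd_mult)
    then have "p dvd fact E" by (simp only: binomial_fact_lemma[OF le])
    then have "p \<le> E" using prime_dvd_fact_iff[OF assms(1)] by simp
    then show False using Ep by simp
  qed
  have part1: "[det A = (-1) ^ nat (d*(d-1) div 2 + \<lfloor>of_int (r-1) * gval p r e d / 2\<rfloor>)
            * (\<Prod>k\<in>{1..d}. int (nat e choose nat (k*s)))] (mod int p)"
    unfolding expo prodeq detA2 by simp
  have part2: "\<not> [det A = 0] (mod int p)"
  proof
    assume "[det A = 0] (mod int p)"
    then have "int p dvd det A" by (simp add: cong_0_iff)
    then have "int p dvd (-1)^K * det A" by simp
    moreover have "(-1)^K * det A = int N"
      unfolding detA2 by (simp add: mult.assoc[symmetric] power_mult_distrib[symmetric])
    ultimately have "int p dvd int N" by simp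
    then show False using Nnd by simp
  qed
  show ?thesis using part1 part2 unfolding A_def h_def R_def E_def D_def by simp
qed

end
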